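(* Let $n\ge 2$ be an integer, $k,c_b>0$, $\rho_0>0$, and let $\lambda_{1,0}\le\cdots\le\lambda_{n,0}$ be real numbers. Consider the system $$\lambda_i'=-\lambda_i^2+\frac{k}{n}(\rho-c_b)\ (i=1,\dots,n),\qquad \rho'=-\rho\lambda,\quad \lambda=\sum_{i=1}^n\lambda_i,\qquad \rho(0)=\rho_0,\ \lambda_i(0)=\lambda_{i,0},$$ and suppose its maximal interval of existence is $[0,t_B)$ with $0<t_B<\infty$. Then there exist integers $1\le J_1\le J_2\le n$ such that $\lim_{t\to t_B^-}\lambda_i(t)=-\infty$ for $1\le i\le J_1$ and $\lim_{t\to t_B^-}\lambda_i(t)=+\infty$ for $J_2<i\le n$.
   Context: Solutions are real-valued and continuously differentiable on $[0,t_B)$. If $J_2=n$ the second condition is vacuous. *)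

theory Defs
  imports "HOL-Analysis.Analysis"
begin

definition is_solution ::
  "nat \<Rightarrow> real \<Rightarrow> real \<Rightarrow> real \<Rightarrow> (nat \<Rightarrow> real) \<Rightarrow> real
    \<Rightarrow> (nat \<Rightarrow> real \<Rightarrow> real) \<Rightarrow> (real \<Rightarrow> real) \<Rightarrow> bool" where
  "is_solution n k cb rho0 lam0 T lam rho \<longleftrightarrow>
     T > 0 \<and>
     rho 0 = rho0 \<and> (\<forall>i\<in>{1..n}. lam i 0 = lam0 i) \<and>
     (\<forall>t\<in>{0..<T}.
        (\<forall>i\<in>{1..n}. (lam i has_real_derivative
              (- (lam i t)\<^sup>2 + k / real n * (rho t - cb))) (at t within {0..<T})) \<and>
        (rho has_real_derivative (- rho t * (\<Sum>i=1..n. lam i t))) (at t within {0..<T}))"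

definition maximal_solution ::
  "nat \<Rightarrow> real \<Rightarrow> real \<Rightarrow> real \<Rightarrow> (nat \<Rightarrow> real) \<Rightarrow> real
    \<Rightarrow> (nat \<Rightarrow> real \<Rightarrow> real) \<Rightarrow> (real \<Rightarrow> real) \<Rightarrow> bool" where
  "maximal_solution n k cb rho0 lam0 T lam rho \<longleftrightarrow>
     is_solution n k cb rho0 lam0 T lam rho \<and>
     \<not> (\<exists>T' lam' rho'. T' > T \<and> is_solution n k cb rho0 lam0 T' lam' rho' \<and>
          (\<forall>t\<in>{0..<T}. rho' t = rho t \<and> (\<forall>i\<in>{1..n}. lam' i t = lam i t)))"

end

theory Submission
  imports Defs "HOL-Analysis.Analysis"
begin

lemma local_uniqueness:
  fixes F :: "'a::real_normed_vector \<Rightarrow> 'a" and y z :: "real \<Rightarrow> 'a"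
  assumes Lip: "\<And>x y. x \<in> cball pz 1 \<Longrightarrow> y \<in> cball pz 1 \<Longrightarrow> norm (F x - F y) \<le> L * norm (x - y)"
    and L: "0 \<le> L" and ab: "a \<le> b" "(b - a) * L \<le> 1/2"
    and y: "\<And>t. t \<in> {a..b} \<Longrightarrow> y t \<in> cball pz 1 \<and> (y has_vector_derivative F (y t)) (at t within {a..b})"
    and z: "\<And>t. t \<in> {a..b} \<Longrightarrow> z t \<in> cball pz 1 \<and> (z has_vector_derivative F (z t)) (at t within {a..b})"
    and yz: "y a = z a"
  shows "\<forall>t\<in>{a..b}. y t = z t"
proof -
  have claim: "\<forall>t\<in>{a..b}. norm (y t - z t) \<le> 2 / 2^m" for m :: nat
  proof (induction m)
    case 0
    show ?case
    proof
      fix t assume t: "t \<in> {a..b}"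
      have "norm (y t - z t) \<le> norm (y t - pz) + norm (pz - z t)"
        by (metis diff_add_cancel norm_triangle_ineq add.commute diff_add_eq)
      also have "\<dots> \<le> 2" using y[OF t] z[OF t]
        by (simp add: dist_norm norm_minus_commute)
      finally show "norm (y t - z t) \<le> 2 / 2^0" by simp
    qed
  next
    case (Suc m)
    define D :: real where "D = 2 / 2^m"
    have D0: "0 \<le> D" by (simp add: D_def)
    show ?case
    proof
      fix t assume t: "t \<in> {a..b}"
      have der: "\<And>x. x \<in> {a..b} \<Longrightarrow> ((\<lambda>s. y s - z s) has_derivative (\<lambda>h. h *\<^sub>R (F (y x) - F (z x)))) (at x within {a..b})"
        using y z by (auto intro!: has_vector_derivative_diff simp: has_vector_derivative_def[symmetric])
      have bnd: "onorm (\<lambda>h. h *\<^sub>R (F (y x) - F (z x))) \<le> L * D" if x: "x \<in> {a..b}" for x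
      proof -
        have "onorm (\<lambda>h::real. h *\<^sub>R (F (y x) - F (z x))) = norm (F (y x) - F (z x))"
        proof -
          have i: "onorm (\<lambda>h::real. h) = 1" by (rule onorm_id)
          show ?thesis using onorm_scaleR_left[OF bounded_linear_ident, of "F (y x) - F (z x)"] i by simp
        qed
        also have "\<dots> \<le> L * norm (y x - z x)" using Lip y[OF x] z[OF x] by blast
        also have "\<dots> \<le> L * D" using Suc.IH x L unfolding D_def by (intro mult_left_mono) auto
        finally show ?thesis .
      qed
      have "norm ((y t - z t) - (y a - z a)) \<le> (L * D) * norm (t - a)"
        by (rule differentiable_bound[OF convex_real_interval(5) der bnd]) (use t ab in auto)
      also have "\<dots> \<le> (L * D) * (b - a)" using t L D0 by (auto intro!: mult_left_mono)
      also have "\<dots> = D * ((b - a) * L)" by simp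
      also have "\<dots> \<le> D * (1/2)" using ab D0 by (intro mult_left_mono) auto
      finally show "norm (y t - z t) \<le> 2 / 2 ^ Suc m" using yz by (simp add: D_def)
    qed
  qed
  show ?thesis
  proof (rule ccontr)
    assume "\<not> ?thesis"
    then obtain t where t: "t \<in> {a..b}" "y t \<noteq> z t" by blast
    then have e: "norm (y t - z t) > 0" by simp
    obtain m :: nat where "1 / 2^m < norm (y t - z t) / 2"
      using real_arch_pow_inv[of "norm (y t - z t) / 2" "1/2"] e by (auto simp: power_one_over)
    then have "2 / 2^m < norm (y t - z t)" by (simp add: field_simps)
    with claim[of m] t show False by fastforce
  qed
qed

lemma integral_norm_le_real:
  fixes g :: "real \<Rightarrow> 'a::banach"
  assumes "continuous_on {a..u} g" "a \<le> u" "\<And>s. s \<in> {a..u} \<Longrightarrow> norm (g s) \<le> B"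
  shows "norm (integral {a..u} g) \<le> B * (u - a)"
proof -
  have B: "0 \<le> B" using assms(3)[of a] assms(2) by (meson atLeastAtMost_iff norm_ge_zero order.trans order_refl)
  have "(g has_integral integral {a..u} g) (cbox a u)"
    using integrable_continuous_interval[OF assms(1)] by (simp add: integrable_integral)
  from has_integral_bound[OF B this] assms(3) assms(2)
  show ?thesis by (auto simp: content_real)
qed

lemma local_existence:
  fixes F :: "'a::banach \<Rightarrow> 'a" and pz :: 'a and a h L M :: real
  assumes Lip: "\<And>x y. x \<in> cball pz 1 \<Longrightarrow> y \<in> cball pz 1 \<Longrightarrow> norm (F x - F y) \<le> L * norm (x - y)"
    and Mb: "\<And>x. x \<in> cball pz 1 \<Longrightarrow> norm (F x) \<le> M"
    and h: "0 < h" "h * M \<le> 1" "h * L \<le> 1/2" "0 \<le> L"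
  shows "\<exists>y. y a = pz \<and> (\<forall>t\<in>{a..a+h}. y t \<in> cball pz 1 \<and>
            (y has_vector_derivative F (y t)) (at t within {a..a+h}))"
proof -
  define b where "b = a + h"
  have ab: "a \<le> b" using h by (simp add: b_def)
  define c where "c t = min b (max a t)" for t
  have c_in: "c t \<in> {a..b}" for t using ab by (auto simp: c_def)
  have c_id: "t \<in> {a..b} \<Longrightarrow> c t = t" for t by (auto simp: c_def)
  have c_cont: "continuous_on UNIV c" unfolding c_def by (intro continuous_intros)
  have M0: "0 \<le> M" using Mb[of pz] by (meson centre_in_cball norm_ge_zero order_trans zero_le_one)
  have LipF: "L-lipschitz_on (cball pz 1) F"
    using Lip h(4) by (auto simp: lipschitz_on_def dist_norm)
  have contF: "continuous_on (cball pz 1) F" by (rule lipschitz_on_continuous_on[OF LipF])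
  define S where "S = {y :: real \<Rightarrow>\<^sub>C 'a. \<forall>t\<in>{a..b}. apply_bcontfun y t \<in> cball pz 1}"
  have gcont: "continuous_on {a..b} (\<lambda>s. F (apply_bcontfun y s))" if "y \<in> S" for y
    using that unfolding S_def
    by (intro continuous_on_compose2[OF contF]) (auto intro: continuous_on_subset)
  define Pf where "Pf y = (\<lambda>t. pz + integral {a..c t} (\<lambda>s. F (apply_bcontfun y s)))" for y
  define P where "P y = Bcontfun (Pf y)" for y
  have intbound: "norm (integral {a..u} (\<lambda>s. F (apply_bcontfun y s))) \<le> M * (u - a)"
    if "y \<in> S" "u \<in> {a..b}" for y u
    using that
    by (intro integral_norm_le_real continuous_on_subset[OF gcont[OF that(1)]] Mb) (auto simp: S_def)
  have Pf_bc: "Pf y \<in> bcontfun" if "y \<in> S" for y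
  proof (rule bcontfun_normI)
    have "continuous_on UNIV (\<lambda>t. integral {a..c t} (\<lambda>s. F (apply_bcontfun y s)))"
      by (rule continuous_on_compose2[OF indefinite_integral_continuous_1[OF integrable_continuous_interval[OF gcont[OF that]]] c_cont])
        (use c_in in auto)
    then show "continuous_on UNIV (Pf y)" unfolding Pf_def by (intro continuous_intros)
    fix t
    have "norm (Pf y t) \<le> norm pz + norm (integral {a..c t} (\<lambda>s. F (apply_bcontfun y s)))"
      unfolding Pf_def by (rule norm_triangle_ineq)
    also have "\<dots> \<le> norm pz + M * (c t - a)" using intbound[OF that c_in] by simp
    also have "\<dots> \<le> norm pz + M * h" using c_in[of t] M0 by (auto simp: b_def intro!: mult_left_mono)
    finally show "norm (Pf y t) \<le> norm pz + M * h" .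
  qed
  have P_apply: "apply_bcontfun (P y) t = Pf y t" if "y \<in> S" for y t
    unfolding P_def using Pf_bc[OF that] by (simp add: Bcontfun_inverse)
  have PS: "P ` S \<subseteq> S"
  proof
    fix w assume "w \<in> P ` S"
    then obtain y where y: "y \<in> S" "w = P y" by blast
    have "apply_bcontfun w t \<in> cball pz 1" if t: "t \<in> {a..b}" for t
    proof -
      have "dist pz (apply_bcontfun w t) = norm (integral {a..c t} (\<lambda>s. F (apply_bcontfun y s)))"
        using y P_apply by (simp add: Pf_def dist_norm)
      also have "\<dots> \<le> M * (c t - a)" using intbound[OF y(1) c_in] by simp
      also have "\<dots> \<le> M * h" using c_in[of t] M0 by (auto simp: b_def intro!: mult_left_mono)
      also have "\<dots> \<le> 1" using h by (simp add: mult.commute)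
      finally show ?thesis by simp
    qed
    then show "w \<in> S" by (simp add: S_def)
  qed
  have contr: "dist (P y) (P z) \<le> (1/2) * dist y z" if yz: "y \<in> S" "z \<in> S" for y z
  proof (rule dist_bound)
    fix t
    have "dist (apply_bcontfun (P y) t) (apply_bcontfun (P z) t)
        = norm (integral {a..c t} (\<lambda>s. F (apply_bcontfun y s)) - integral {a..c t} (\<lambda>s. F (apply_bcontfun z s)))"
      using P_apply yz by (simp add: Pf_def dist_norm)
    also have "\<dots> = norm (integral {a..c t} (\<lambda>s. F (apply_bcontfun y s) - F (apply_bcontfun z s)))"
      using c_in[of t]
      by (subst integral_diff) (auto intro!: integrable_continuous_interval continuous_on_subset[OF gcont] yz)
    also have "\<dots> \<le> (L * dist y z) * (c t - a)"
    proof (rule integral_norm_le_real)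
      show "continuous_on {a..c t} (\<lambda>s. F (apply_bcontfun y s) - F (apply_bcontfun z s))"
        using c_in[of t] by (auto intro!: continuous_intros continuous_on_subset[OF gcont] yz)
      show "a \<le> c t" using c_in[of t] by simp
      fix s assume s: "s \<in> {a..c t}"
      then have s': "s \<in> {a..b}" using c_in[of t] by auto
      have "norm (F (apply_bcontfun y s) - F (apply_bcontfun z s)) \<le> L * norm (apply_bcontfun y s - apply_bcontfun z s)"
        using Lip yz s' by (auto simp: S_def)
      also have "\<dots> \<le> L * dist y z" using dist_bounded[of y s z] h(4) by (simp add: dist_norm mult_left_mono)
      finally show "norm (F (apply_bcontfun y s) - F (apply_bcontfun z s)) \<le> L * dist y z" .
    qed
    also have "\<dots> \<le> (L * dist y z) * h" using c_in[of t] h(4) by (auto simp: b_def intro!: mult_left_mono)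
    also have "\<dots> = (h * L) * dist y z" by simp
    also have "\<dots> \<le> (1/2) * dist y z" using h(3) by (intro mult_right_mono) auto
    finally show "dist (apply_bcontfun (P y) t) (apply_bcontfun (P z) t) \<le> (1/2) * dist y z" .
  qed
  have closedS: "closed S"
  proof -
    have "S = (\<Inter>t\<in>{a..b}. {y :: real \<Rightarrow>\<^sub>C 'a. dist pz (apply_bcontfun y t) \<le> 1})"
      by (auto simp: S_def)
    moreover have "closed {y :: real \<Rightarrow>\<^sub>C 'a. dist pz (apply_bcontfun y t) \<le> 1}" for t
    proof -
      have "1-lipschitz_on UNIV (\<lambda>y :: real \<Rightarrow>\<^sub>C 'a. apply_bcontfun y t)"
        by (auto simp: lipschitz_on_def dist_bounded)
      then have "continuous_on UNIV (\<lambda>y :: real \<Rightarrow>\<^sub>C 'a. apply_bcontfun y t)"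
        by (rule lipschitz_on_continuous_on)
      then have "continuous_on UNIV (\<lambda>y :: real \<Rightarrow>\<^sub>C 'a. dist pz (apply_bcontfun y t))"
        by (intro continuous_intros)
      then show ?thesis by (intro closed_Collect_le) (auto intro: continuous_intros)
    qed
    ultimately show ?thesis by auto
  qed
  have "const_bcontfun pz \<in> S" by (simp add: S_def)
  then have Sne: "S \<noteq> {}" by auto
  have "\<exists>!y\<in>S. P y = y"
    by (rule Banach_fix[OF complete_eq_closed[THEN iffD2, OF closedS] Sne _ _ PS contr]) auto
  then obtain y where y: "y \<in> S" "P y = y" by blast
  define Y where "Y = apply_bcontfun y"
  have Yeq: "Y t = pz + integral {a..t} (\<lambda>s. F (Y s))" if "t \<in> {a..b}" for t
    using P_apply[OF y(1), of t] y(2) c_id[OF that] by (simp add: Pf_def Y_def)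
  show ?thesis
  proof (intro exI conjI ballI)
    show "Y a = pz" using Yeq[of a] ab by simp
    fix t assume t: "t \<in> {a..a+h}"
    then have t': "t \<in> {a..b}" by (simp add: b_def)
    show "Y t \<in> cball pz 1" using y(1) t' by (simp add: S_def Y_def)
    have "((\<lambda>u. pz + integral {a..u} (\<lambda>s. F (Y s))) has_vector_derivative F (Y t)) (at t within {a..b})"
      using integral_has_vector_derivative[OF gcont[OF y(1)] t'] unfolding Y_def
      by (intro derivative_eq_intros) auto
    then have "(Y has_vector_derivative F (Y t)) (at t within {a..b})"
      by (rule has_vector_derivative_transform_within[where d=1]) (use t' Yeq in auto)
    then show "(Y has_vector_derivative F (Y t)) (at t within {a..a+h})" by (simp add: b_def)
  qed
qed

instantiation nat :: metric_space
begin
definition dist_nat :: "nat \<Rightarrow> nat \<Rightarrow> real" where "dist_nat m n = \<bar>real m - real n\<bar>"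
definition uniformity_nat :: "(nat \<times> nat) filter" where
  "uniformity_nat = (INF e\<in>{0<..}. principal {(x, y). dist x y < e})"
instance
proof
  show "uniformity = (INF e\<in>{0<..}. principal {(x, y). dist (x::nat) y < e})" by (rule uniformity_nat_def)
  fix U :: "nat set"
  have "eventually (\<lambda>(x', y). x' = x \<longrightarrow> y \<in> U) uniformity" if "x \<in> U" for x
    unfolding uniformity_nat_def
  proof (rule eventually_INF1[of "1/2"])
    show "(1/2::real) \<in> {0<..}" by simp
    have "a = b" if ab: "dist a b < 1/2" for a b :: nat
    proof (rule ccontr)
      assume "a \<noteq> b"
      then have "real a + 1 \<le> real b \<or> real b + 1 \<le> real a"
        by (metis Suc_leI linorder_neqE_nat of_nat_Suc of_nat_le_iff add.commute)
      then show False using ab by (auto simp: dist_nat_def)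
    qed
    then show "eventually (\<lambda>(x', y). x' = x \<longrightarrow> y \<in> U) (principal {(x, y). dist x y < (1/2::real)})"
      using that by (auto simp: eventually_principal)
  qed
  then show "open U = (\<forall>x\<in>U. eventually (\<lambda>(x', y). x' = x \<longrightarrow> y \<in> U) uniformity)"
    by (simp add: open_discrete)
next
  fix x y z :: nat
  show "(dist x y = 0) = (x = y)" by (simp add: dist_nat_def)
  show "dist x y \<le> dist x z + dist y z" by (simp add: dist_nat_def)
qed
end
instance bcontfun :: (metric_space, banach) banach ..

definition trunc :: "nat \<Rightarrow> (nat \<Rightarrow> real) \<Rightarrow> (nat \<Rightarrow>\<^sub>C real)" where
  "trunc n g = Bcontfun (\<lambda>i. if i \<le> n then g i else 0)"

lemma trunc_in: "(\<lambda>i::nat. if i \<le> n then g i else (0::real)) \<in> bcontfun"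
proof (rule bcontfun_normI)
  show "continuous_on UNIV (\<lambda>i::nat. if i \<le> n then g i else (0::real))"
    by (simp add: continuous_on_discrete)
  fix i :: nat
  show "norm (if i \<le> n then g i else 0) \<le> (\<Sum>j\<le>n. \<bar>g j\<bar>)"
  proof (cases "i \<le> n")
    case True
    then have "\<bar>g i\<bar> \<le> (\<Sum>j\<le>n. \<bar>g j\<bar>)"
      by (intro member_le_sum) auto
    then show ?thesis using True by simp
  qed (auto intro: sum_nonneg)
qed

lemma trunc_apply [simp]: "apply_bcontfun (trunc n g) i = (if i \<le> n then g i else 0)"
  unfolding trunc_def using trunc_in by (simp add: Bcontfun_inverse)

lemma comp_le: "\<bar>apply_bcontfun (x :: nat \<Rightarrow>\<^sub>C real) i\<bar> \<le> norm x"
  using norm_bounded[of x i] by simp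

lemma apply_sum_bcontfun: "apply_bcontfun (\<Sum>a\<in>A. f a) x = (\<Sum>a\<in>A. apply_bcontfun (f a) x)"
  by (induction A rule: infinite_finite_induct) auto

lemma bounded_linear_eval: "bounded_linear (\<lambda>x :: nat \<Rightarrow>\<^sub>C real. apply_bcontfun x i)"
proof (rule bounded_linear_intro[where K=1])
  show "\<And>x y. apply_bcontfun (x + y) i = apply_bcontfun x i + apply_bcontfun y i" by simp
  show "\<And>r x. apply_bcontfun (r *\<^sub>R x) i = r *\<^sub>R apply_bcontfun x i" by simp
  show "\<And>x. norm (apply_bcontfun x i) \<le> norm x * 1" using norm_bounded by simp
qed

lemma sum_delta_aux: "(\<Sum>i\<le>(n::nat). c i * (if x = i then 1 else 0)) = (if x \<le> n then c x else (0::real))"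
proof -
  have "(\<Sum>i\<le>n. c i * (if x = i then 1 else 0)) = (\<Sum>i\<in>{..n}. if i = x then c i else 0)"
    by (rule sum.cong) auto
  also have "\<dots> = (if x \<in> {..n} then c x else 0)" by (rule sum.delta) simp
  finally show ?thesis by simp
qed

lemma trunc_deriv:
  assumes "\<And>i. i \<le> n \<Longrightarrow> ((\<lambda>t. g i t) has_real_derivative g' i) (at t within S)"
  shows "((\<lambda>t. trunc n (\<lambda>i. g i t)) has_vector_derivative trunc n g') (at t within S)"
proof -
  define e where "e i = trunc n (\<lambda>j. if j = i then 1 else 0)" for i
  have eq1: "trunc n (\<lambda>i. g i s) = (\<Sum>i\<le>n. g i s *\<^sub>R e i)" for s
    by (rule bcontfun_eqI) (simp add: apply_sum_bcontfun e_def sum_delta_aux)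
  have eq2: "trunc n g' = (\<Sum>i\<le>n. g' i *\<^sub>R e i)"
    by (rule bcontfun_eqI) (simp add: apply_sum_bcontfun e_def sum_delta_aux)
  have "((\<lambda>s. \<Sum>i\<le>n. g i s *\<^sub>R e i) has_vector_derivative (\<Sum>i\<le>n. g' i *\<^sub>R e i)) (at t within S)"
  proof (rule has_vector_derivative_sum)
    fix i assume "i \<in> {..n}"
    then have "((\<lambda>s. g i s *\<^sub>R e i) has_vector_derivative g i t *\<^sub>R 0 + g' i *\<^sub>R e i) (at t within S)"
      by (intro has_vector_derivative_scaleR assms has_vector_derivative_const) auto
    then show "((\<lambda>s. g i s *\<^sub>R e i) has_vector_derivative g' i *\<^sub>R e i) (at t within S)" by simp
  qed
  then show ?thesis by (simp add: eq1 eq2)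
qed

definition Fsys :: "nat \<Rightarrow> real \<Rightarrow> real \<Rightarrow> (nat \<Rightarrow>\<^sub>C real) \<Rightarrow> (nat \<Rightarrow>\<^sub>C real)" where
  "Fsys n k cb x = trunc n (\<lambda>i. if i = 0 then - apply_bcontfun x 0 * (\<Sum>j=1..n. apply_bcontfun x j)
      else - (apply_bcontfun x i)\<^sup>2 + k / real n * (apply_bcontfun x 0 - cb))"

lemma sum_abs_bound:
  fixes f :: "nat \<Rightarrow> real"
  assumes "\<And>j. \<bar>f j\<bar> \<le> B"
  shows "\<bar>\<Sum>j=1..n. f j\<bar> \<le> real n * B"
proof -
  have "\<bar>\<Sum>j=1..n. f j\<bar> \<le> (\<Sum>j=1..n. \<bar>f j\<bar>)" by (rule sum_abs)
  also have "\<dots> \<le> (\<Sum>j=1..n. B)" using assms by (intro sum_mono) auto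
  finally show ?thesis by simp
qed

lemma Fsys_lip:
  assumes "norm x \<le> R" "norm y \<le> R" "0 \<le> k"
  shows "norm (Fsys n k cb x - Fsys n k cb y) \<le> (2*real n*R + 2*R + k / real n) * norm (x - y)"
proof (rule norm_bound)
  fix i
  define d where "d = norm (x - y)"
  have R0: "0 \<le> R" using assms(1) norm_ge_zero order_trans by blast
  have d0: "0 \<le> d" by (simp add: d_def)
  have cx: "\<bar>apply_bcontfun x j\<bar> \<le> R" for j using comp_le[of x j] assms by simp
  have cy: "\<bar>apply_bcontfun y j\<bar> \<le> R" for j using comp_le[of y j] assms by simp
  have cd: "\<bar>apply_bcontfun x j - apply_bcontfun y j\<bar> \<le> d" for j using comp_le[of "x - y" j] by (simp add: d_def)
  have kn: "0 \<le> k / real n" using assms(3) by simp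
  show "norm (apply_bcontfun (Fsys n k cb x - Fsys n k cb y) i) \<le> (2*real n*R + 2*R + k / real n) * d"
  proof (cases "i \<le> n")
    case False then show ?thesis using R0 d0 kn by (simp add: Fsys_def)
  next
    case True
    show ?thesis
    proof (cases "i = 0")
      case True
      let ?x0 = "apply_bcontfun x 0" and ?y0 = "apply_bcontfun y 0"
      let ?sx = "\<Sum>j=1..n. apply_bcontfun x j" and ?sy = "\<Sum>j=1..n. apply_bcontfun y j"
      have sx: "\<bar>?sx\<bar> \<le> real n * R" by (rule sum_abs_bound[OF cx])
      have sd: "\<bar>?sx - ?sy\<bar> \<le> real n * d"
        using sum_abs_bound[of "\<lambda>j. apply_bcontfun x j - apply_bcontfun y j" d n] cd by (simp add: sum_subtractf)
      have "\<bar>- ?x0 * ?sx - (- ?y0 * ?sy)\<bar> = \<bar>(?x0 - ?y0) * ?sx + ?y0 * (?sx - ?sy)\<bar>"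
        by (simp add: algebra_simps)
      also have "\<dots> \<le> \<bar>?x0 - ?y0\<bar> * \<bar>?sx\<bar> + \<bar>?y0\<bar> * \<bar>?sx - ?sy\<bar>"
        by (metis abs_mult abs_triangle_ineq)
      also have "\<dots> \<le> d * (real n * R) + R * (real n * d)"
        by (intro add_mono mult_mono cd cy sx sd) (auto simp: d0 R0)
      also have "\<dots> \<le> (2*real n*R + 2*R + k / real n) * d"
      proof -
        have "0 \<le> R * d" "0 \<le> k * d / real n" using R0 d0 assms(3) by simp_all
        then show ?thesis by (simp add: algebra_simps)
      qed
      finally show ?thesis using \<open>i = 0\<close> by (simp add: Fsys_def)
    next
      case False
      let ?x0 = "apply_bcontfun x 0" and ?y0 = "apply_bcontfun y 0"
      let ?xi = "apply_bcontfun x i" and ?yi = "apply_bcontfun y i"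
      have "\<bar>(- ?xi\<^sup>2 + k / real n * (?x0 - cb)) - (- ?yi\<^sup>2 + k / real n * (?y0 - cb))\<bar>
          = \<bar>- ((?xi - ?yi) * (?xi + ?yi)) + k / real n * (?x0 - ?y0)\<bar>"
        by (simp add: algebra_simps power2_eq_square)
      also have "\<dots> \<le> \<bar>?xi - ?yi\<bar> * \<bar>?xi + ?yi\<bar> + k / real n * \<bar>?x0 - ?y0\<bar>"
        using kn by (metis abs_minus_cancel abs_mult abs_of_nonneg abs_triangle_ineq)
      also have "\<dots> \<le> d * (2 * R) + k / real n * d"
        using cx[of i] cy[of i] abs_triangle_ineq[of ?xi ?yi]
        by (intro add_mono mult_mono cd mult_left_mono kn) (auto simp: d0)
      also have "\<dots> \<le> (2*real n*R + 2*R + k / real n) * d"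
      proof -
        have "0 \<le> real n * R * d" using R0 d0 by simp
        then show ?thesis by (simp add: algebra_simps)
      qed
      finally show ?thesis using \<open>i \<noteq> 0\<close> \<open>i \<le> n\<close> by (simp add: Fsys_def)
    qed
  qed
qed

lemma Fsys_bound:
  assumes "norm x \<le> R" "0 \<le> k" "0 \<le> cb"
  shows "norm (Fsys n k cb x) \<le> real n * R\<^sup>2 + R\<^sup>2 + k / real n * (R + cb)"
proof (rule norm_bound)
  fix i
  have R0: "0 \<le> R" using assms(1) norm_ge_zero order_trans by blast
  have cx: "\<bar>apply_bcontfun x j\<bar> \<le> R" for j using comp_le[of x j] assms by simp
  have kn: "0 \<le> k / real n" using assms(2) by simp
  have sq: "\<bar>a\<bar> \<le> R \<Longrightarrow> \<bar>b\<bar> \<le> R \<Longrightarrow> \<bar>a * b\<bar> \<le> R\<^sup>2" for a b :: real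
    by (simp add: abs_mult power2_eq_square mult_mono R0)
  show "norm (apply_bcontfun (Fsys n k cb x) i) \<le> real n * R\<^sup>2 + R\<^sup>2 + k / real n * (R + cb)"
  proof (cases "i \<le> n")
    case False then show ?thesis using R0 kn assms by (simp add: Fsys_def)
  next
    case True
    show ?thesis
    proof (cases "i = 0")
      case True
      have "\<bar>- apply_bcontfun x 0 * (\<Sum>j=1..n. apply_bcontfun x j)\<bar> \<le> R * (real n * R)"
        unfolding abs_minus_cancel abs_mult mult_minus_left
        by (intro mult_mono cx sum_abs_bound) (auto simp: R0)
      also have "\<dots> \<le> real n * R\<^sup>2 + R\<^sup>2 + k / real n * (R + cb)"
        using R0 kn assms by (simp add: power2_eq_square algebra_simps)
      finally show ?thesis using \<open>i = 0\<close> by (simp add: Fsys_def)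
    next
      case False
      have "\<bar>- (apply_bcontfun x i)\<^sup>2 + k / real n * (apply_bcontfun x 0 - cb)\<bar>
          \<le> \<bar>apply_bcontfun x i * apply_bcontfun x i\<bar> + k / real n * \<bar>apply_bcontfun x 0 - cb\<bar>"
        using kn by (metis abs_minus_cancel abs_mult abs_of_nonneg abs_triangle_ineq power2_eq_square)
      also have "\<dots> \<le> R\<^sup>2 + k / real n * (R + cb)"
        using cx[of 0] assms(3) by (intro add_mono sq cx mult_left_mono kn) auto
      also have "\<dots> \<le> real n * R\<^sup>2 + R\<^sup>2 + k / real n * (R + cb)" by simp
      finally show ?thesis using \<open>i \<noteq> 0\<close> \<open>i \<le> n\<close> by (simp add: Fsys_def)
    qed
  qed
qed

lemma trunc_cong: "(\<And>i. i \<le> n \<Longrightarrow> f i = g i) \<Longrightarrow> trunc n f = trunc n g"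
  by (rule bcontfun_eqI) simp

lemma bounded_contra:
  assumes ms: "maximal_solution n k cb rho0 lam0 tB lam rho"
    and n: "1 \<le> n" and k: "0 < k" and cb: "0 \<le> cb"
    and R: "\<And>t. t \<in> {0..<tB} \<Longrightarrow> \<bar>rho t\<bar> \<le> R \<and> (\<forall>i\<in>{1..n}. \<bar>lam i t\<bar> \<le> R)"
  shows False
proof -
  have sol: "is_solution n k cb rho0 lam0 tB lam rho"
    and noext: "\<not> (\<exists>T' lam' rho'. T' > tB \<and> is_solution n k cb rho0 lam0 T' lam' rho' \<and>
          (\<forall>t\<in>{0..<tB}. rho' t = rho t \<and> (\<forall>i\<in>{1..n}. lam' i t = lam i t)))"
    using ms unfolding maximal_solution_def by auto
  have tB: "0 < tB" and r0: "rho 0 = rho0" and l0: "\<And>i. i \<in> {1..n} \<Longrightarrow> lam i 0 = lam0 i"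
    using sol unfolding is_solution_def by auto
  have Dl: "\<And>t i. t \<in> {0..<tB} \<Longrightarrow> i \<in> {1..n} \<Longrightarrow> (lam i has_real_derivative
              (- (lam i t)\<^sup>2 + k / real n * (rho t - cb))) (at t within {0..<tB})"
    and Dr: "\<And>t. t \<in> {0..<tB} \<Longrightarrow> (rho has_real_derivative (- rho t * (\<Sum>i=1..n. lam i t))) (at t within {0..<tB})"
    using sol unfolding is_solution_def by auto
  have R0: "0 \<le> R" using R[of 0] tB by auto
  define X where "X t = trunc n (\<lambda>i. if i = 0 then rho t else lam i t)" for t
  have Xnorm: "norm (X t) \<le> R" if t: "t \<in> {0..<tB}" for t
  proof (rule norm_bound)
    fix i
    show "norm (apply_bcontfun (X t) i) \<le> R"
      using R[OF t] R0 by (cases "i = 0"; cases "i \<le> n") (auto simp: X_def)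
  qed
  have XF: "Fsys n k cb (X t) = trunc n (\<lambda>i. if i = 0 then - rho t * (\<Sum>j=1..n. lam j t)
        else - (lam i t)\<^sup>2 + k / real n * (rho t - cb))" for t
  proof -
    have "(\<Sum>j=1..n. apply_bcontfun (X t) j) = (\<Sum>j=1..n. lam j t)"
      by (rule sum.cong) (auto simp: X_def)
    then show ?thesis unfolding Fsys_def by (intro trunc_cong) (auto simp: X_def)
  qed
  have Xder: "(X has_vector_derivative Fsys n k cb (X t)) (at t within {0..<tB})" if t: "t \<in> {0..<tB}" for t
  proof -
    have "((\<lambda>t. trunc n (\<lambda>i. if i = 0 then rho t else lam i t)) has_vector_derivative
        trunc n (\<lambda>i. if i = 0 then - rho t * (\<Sum>j=1..n. lam j t)
          else - (lam i t)\<^sup>2 + k / real n * (rho t - cb))) (at t within {0..<tB})"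
    proof (rule trunc_deriv)
      fix i assume i: "i \<le> n"
      show "((\<lambda>t. if i = 0 then rho t else lam i t) has_real_derivative
          (if i = 0 then - rho t * (\<Sum>j=1..n. lam j t) else - (lam i t)\<^sup>2 + k / real n * (rho t - cb)))
          (at t within {0..<tB})"
        using Dr[OF t] Dl[OF t, of i] i by (cases "i = 0") auto
    qed
    then show ?thesis unfolding XF by (simp add: X_def[abs_def])
  qed
  define R1 where "R1 = R + 1"
  define L where "L = 2*real n*R1 + 2*R1 + k / real n"
  define M where "M = real n * R1\<^sup>2 + R1\<^sup>2 + k / real n * (R1 + cb)"
  have L0: "0 \<le> L" using R0 k by (simp add: L_def R1_def)
  have M0: "0 \<le> M" using R0 k cb by (simp add: M_def R1_def)
  define h where "h = 1 / (2*L + M + 1)"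
  have h0: "0 < h" using L0 M0 by (simp add: h_def)
  have hM: "h * M \<le> 1" using L0 M0 by (simp add: h_def field_simps)
  have hL: "h * L \<le> 1/2" using L0 M0 by (simp add: h_def field_simps)
  define a where "a = max 0 (tB - h/2)"
  have a: "0 \<le> a" "a < tB" "tB < a + h" "tB - a \<le> h" using tB h0 by (auto simp: a_def)
  define x0 where "x0 = X a"
  have x0n: "norm x0 \<le> R" using Xnorm a by (simp add: x0_def)
  have ball: "norm x \<le> R1" if "x \<in> cball x0 1" for x
  proof -
    have "norm x \<le> norm x0 + norm (x - x0)" by (metis add.commute diff_add_cancel norm_triangle_ineq)
    also have "\<dots> \<le> R + 1" using that x0n by (simp add: dist_norm norm_minus_commute add_mono)
    finally show ?thesis by (simp add: R1_def)
  qed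
  have Lip: "\<And>x y. x \<in> cball x0 1 \<Longrightarrow> y \<in> cball x0 1 \<Longrightarrow>
      norm (Fsys n k cb x - Fsys n k cb y) \<le> L * norm (x - y)"
    unfolding L_def using ball k by (intro Fsys_lip) auto
  have Mb: "\<And>x. x \<in> cball x0 1 \<Longrightarrow> norm (Fsys n k cb x) \<le> M"
    unfolding M_def using ball k cb by (intro Fsys_bound) auto
  obtain Y where Ya: "Y a = x0"
    and Yd: "\<And>t. t \<in> {a..a+h} \<Longrightarrow> Y t \<in> cball x0 1 \<and>
         (Y has_vector_derivative Fsys n k cb (Y t)) (at t within {a..a+h})"
    using local_existence[where F="Fsys n k cb" and pz=x0 and L=L and M=M and h=h and a=a] Lip Mb h0 hM hL L0 by blast
  have XY: "X t = Y t" if t: "t \<in> {a..<tB}" for t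
  proof -
    have sub: "{a..t} \<subseteq> {0..<tB}" using a t by auto
    have Xd: "(X has_vector_derivative Fsys n k cb (X s)) (at s within {a..t})" if "s \<in> {a..t}" for s
    proof -
      have "s \<in> {0..<tB}" using sub that by auto
      from has_vector_derivative_within_subset[OF Xder[OF this] sub] show ?thesis .
    qed
    have Xb: "X s \<in> cball x0 1" if s: "s \<in> {a..t}" for s
    proof -
      have der: "(X has_derivative (\<lambda>h. h *\<^sub>R Fsys n k cb (X u))) (at u within {a..s})" if "u \<in> {a..s}" for u
        using Xd[of u] that s by (auto simp: has_vector_derivative_def intro: has_derivative_subset)
      have bnd: "onorm (\<lambda>h. h *\<^sub>R Fsys n k cb (X u)) \<le> M" if "u \<in> {a..s}" for u
      proof -
        have i: "onorm (\<lambda>h::real. h) = 1" by (rule onorm_id)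
        have "onorm (\<lambda>h. h *\<^sub>R Fsys n k cb (X u)) = norm (Fsys n k cb (X u))"
          using onorm_scaleR_left[OF bounded_linear_ident, of "Fsys n k cb (X u)"] i by simp
        also have "\<dots> \<le> M"
        proof -
          have "u \<in> {a..t}" using that s by auto
          then have "u \<in> {0..<tB}" using sub by blast
          then have "norm (X u) \<le> R1" using Xnorm[of u] by (simp add: R1_def)
          then show ?thesis unfolding M_def using k cb by (intro Fsys_bound) auto
        qed
        finally show ?thesis .
      qed
      have "norm (X s - X a) \<le> M * norm (s - a)"
        by (rule differentiable_bound[OF convex_real_interval(5) der bnd]) (use s in auto)
      also have "\<dots> \<le> M * h" using s t a M0 by (intro mult_left_mono) auto
      also have "\<dots> \<le> 1" using hM by (simp add: mult.commute)
      finally show ?thesis by (simp add: x0_def dist_norm norm_minus_commute)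
    qed
    have "\<forall>s\<in>{a..t}. X s = Y s"
    proof (rule local_uniqueness[OF Lip L0])
      show "a \<le> t" using t by simp
      show "(t - a) * L \<le> 1/2" using t a hL L0
        by (metis atLeastLessThan_iff diff_strict_right_mono less_eq_real_def mult.commute mult_right_mono order.trans)
      show "\<And>s. s \<in> {a..t} \<Longrightarrow> X s \<in> cball x0 1 \<and> (X has_vector_derivative Fsys n k cb (X s)) (at s within {a..t})"
        using Xb Xd by blast
      show "\<And>s. s \<in> {a..t} \<Longrightarrow> Y s \<in> cball x0 1 \<and> (Y has_vector_derivative Fsys n k cb (Y s)) (at s within {a..t})"
      proof -
        fix s assume s: "s \<in> {a..t}"
        then have s': "s \<in> {a..a+h}" using t a by auto
        have "{a..t} \<subseteq> {a..a+h}" using t a by auto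
        then show "Y s \<in> cball x0 1 \<and> (Y has_vector_derivative Fsys n k cb (Y s)) (at s within {a..t})"
          using Yd[OF s'] by (auto intro: has_vector_derivative_within_subset)
      qed
      show "X a = Y a" using Ya by (simp add: x0_def)
    qed
    then show ?thesis using t by auto
  qed
  define T' where "T' = a + h"
  define E where "E t = (if t < tB then X t else Y t)" for t
  have Eder: "(E has_vector_derivative Fsys n k cb (E t)) (at t within {0..<T'})" if t: "t \<in> {0..<T'}" for t
  proof (cases "t < tB")
    case True
    have "at t within {0..<T'} = at t within {0..<tB}"
      by (rule at_within_nhd[where S="{..<tB}"]) (use True a in \<open>auto simp: T'_def\<close>)
    then have "(X has_vector_derivative Fsys n k cb (X t)) (at t within {0..<T'})"
      using Xder[of t] True t by simp
    then have "(E has_vector_derivative Fsys n k cb (X t)) (at t within {0..<T'})"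
      by (rule has_vector_derivative_transform_within[where d="tB - t"])
        (use True t in \<open>auto simp: E_def dist_real_def\<close>)
    then show ?thesis using True by (simp add: E_def)
  next
    case False
    have "at t within {0..<T'} = at t within {a..a+h}"
      by (rule at_within_nhd[where S="{a<..<T'}"]) (use False a t in \<open>auto simp: T'_def\<close>)
    then have "(Y has_vector_derivative Fsys n k cb (Y t)) (at t within {0..<T'})"
      using Yd[of t] False t a by (simp add: T'_def)
    then have "(E has_vector_derivative Fsys n k cb (Y t)) (at t within {0..<T'})"
    proof (rule has_vector_derivative_transform_within[where d="t - a"])
      show "0 < t - a" using False a by simp
      show "t \<in> {0..<T'}" using t .
      fix x' assume x': "x' \<in> {0..<T'}" "dist x' t < t - a"
      then have "a < x'" by (auto simp: dist_real_def)
      then show "Y x' = E x'" using XY[of x'] by (auto simp: E_def)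
    qed
    then show ?thesis using False by (simp add: E_def)
  qed
  define lam' where "lam' i t = apply_bcontfun (E t) i" for i t
  define rho' where "rho' t = apply_bcontfun (E t) 0" for t
  have comp: "((\<lambda>t. apply_bcontfun (E t) i) has_real_derivative apply_bcontfun (Fsys n k cb (E t)) i)
      (at t within {0..<T'})" if "t \<in> {0..<T'}" for t i
    unfolding has_real_derivative_iff_has_vector_derivative
    by (rule bounded_linear.has_vector_derivative[OF bounded_linear_eval Eder[OF that]])
  have E0: "E 0 = X 0" using tB by (simp add: E_def)
  have "is_solution n k cb rho0 lam0 T' lam' rho'"
    unfolding is_solution_def
  proof (intro conjI ballI)
    show "0 < T'" using a by (simp add: T'_def)
    show "rho' 0 = rho0" using E0 r0 by (simp add: rho'_def X_def)
    show "lam' i 0 = lam0 i" if "i \<in> {1..n}" for i using E0 l0[OF that] that by (simp add: lam'_def X_def)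
    fix t assume t: "t \<in> {0..<T'}"
    show "(lam' i has_real_derivative - (lam' i t)\<^sup>2 + k / real n * (rho' t - cb)) (at t within {0..<T'})"
      if i: "i \<in> {1..n}" for i
      using comp[OF t, of i] i unfolding lam'_def rho'_def by (simp add: Fsys_def)
    have "(\<Sum>j=1..n. apply_bcontfun (E t) j) = (\<Sum>j=1..n. lam' j t)" by (simp add: lam'_def)
    then show "(rho' has_real_derivative - rho' t * (\<Sum>i=1..n. lam' i t)) (at t within {0..<T'})"
      using comp[OF t, of 0] unfolding rho'_def by (simp add: Fsys_def lam'_def)
  qed
  moreover have "T' > tB" using a by (simp add: T'_def)
  moreover have "\<forall>t\<in>{0..<tB}. rho' t = rho t \<and> (\<forall>i\<in>{1..n}. lam' i t = lam i t)"
    by (auto simp: rho'_def lam'_def E_def X_def)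
  ultimately show False using noext by blast
qed

lemma deriv_cont_on:
  assumes "\<And>x. x \<in> T \<Longrightarrow> (f has_real_derivative f' x) (at x within S)" "T \<subseteq> S"
  shows "continuous_on T f"
  unfolding continuous_on_eq_continuous_within
  using assms by (meson DERIV_continuous continuous_within_subset)

lemma mono_deriv:
  fixes f :: "real \<Rightarrow> real"
  assumes ab: "a \<le> b" and sub: "{a..b} \<subseteq> S"
    and d: "\<And>x. x \<in> {a..b} \<Longrightarrow> (f has_real_derivative f' x) (at x within S)"
    and nn: "\<And>x. x \<in> {a<..<b} \<Longrightarrow> 0 \<le> f' x"
  shows "f a \<le> f b"
proof (rule DERIV_nonneg_imp_increasing_open[OF ab])
  show "continuous_on {a..b} f" by (rule deriv_cont_on[OF d sub])
  fix x assume x: "a < x" "x < b"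
  have "at x within S = at x"
    by (rule at_within_open_subset[of x "{a<..<b}"]) (use x sub in auto)
  then show "\<exists>y. (f has_real_derivative y) (at x) \<and> 0 \<le> y"
    using d[of x] nn[of x] x by auto
qed

lemma barrier:
  fixes f :: "real \<Rightarrow> real"
  assumes ab: "a \<le> b" and sub: "{a..b} \<subseteq> S"
    and d: "\<And>x. x \<in> {a..b} \<Longrightarrow> (f has_real_derivative f' x) (at x within S)"
    and fa: "f a \<le> B"
    and np: "\<And>x. x \<in> {a<..<b} \<Longrightarrow> f x > B \<Longrightarrow> f' x \<le> 0"
  shows "f b \<le> B"
proof (rule ccontr)
  assume fb: "\<not> f b \<le> B"
  have cont: "continuous_on {a..b} f" by (rule deriv_cont_on[OF d sub])
  define T where "T = {x \<in> {a..b}. f x \<le> B}"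
  have cT: "closed T" unfolding T_def
    by (rule continuous_on_closed_Collect_le[OF cont]) (auto intro: continuous_intros)
  have neT: "T \<noteq> {}" using ab fa by (auto simp: T_def)
  have bT: "bdd_above T" by (auto simp: T_def bdd_above_def)
  define s where "s = Sup T"
  have sT: "s \<in> T" unfolding s_def by (rule closed_contains_Sup[OF neT bT cT])
  have s_le: "x \<le> s" if "x \<in> T" for x unfolding s_def by (rule cSup_upper[OF that bT])
  have sb: "s < b" using sT fb by (auto simp: T_def less_le)
  have as: "a \<le> s" using sT by (auto simp: T_def)
  have gt: "f x > B" if "x \<in> {s<..b}" for x
  proof (rule ccontr)
    assume "\<not> f x > B"
    then have "x \<in> T" using that as by (auto simp: T_def)
    then show False using s_le[of x] that by auto
  qed
  have "(\<lambda>x. - f x) s \<le> (\<lambda>x. - f x) b"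
  proof (rule mono_deriv[of s b S _ "\<lambda>x. - f' x"])
    show "s \<le> b" using sb by simp
    show "{s..b} \<subseteq> S" using sub as by auto
    show "((\<lambda>x. - f x) has_real_derivative - f' x) (at x within S)" if "x \<in> {s..b}" for x
      using d[of x] that as by (auto intro: derivative_intros)
    show "0 \<le> - f' x" if "x \<in> {s<..<b}" for x
      using np[of x] gt[of x] that as by auto
  qed
  then have "f b \<le> f s" by simp
  then show False using sT fb by (auto simp: T_def)
qed

lemma antideriv:
  fixes g :: "real \<Rightarrow> real"
  assumes c: "continuous_on {0..<T} g" and t: "t \<in> {0..<T}"
  shows "((\<lambda>s. integral {0..s} g) has_real_derivative g t) (at t within {0..<T})"
proof -
  define b where "b = (t + T) / 2"
  have tb: "t < b" "b < T" using t by (auto simp: b_def)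
  have "continuous_on {0..b} g" using c tb by (auto intro: continuous_on_subset)
  then have "((\<lambda>s. integral {0..s} g) has_vector_derivative g t) (at t within {0..b})"
    by (rule integral_has_vector_derivative) (use t tb in auto)
  moreover have "at t within {0..<T} = at t within {0..b}"
    by (rule at_within_nhd[where S="{..<b}"]) (use t tb in auto)
  ultimately show ?thesis by (simp add: has_real_derivative_iff_has_vector_derivative)
qed

lemma lin_sol:
  fixes x a :: "real \<Rightarrow> real"
  assumes c: "continuous_on {0..<T} a"
    and d: "\<And>t. t \<in> {0..<T} \<Longrightarrow> (x has_real_derivative a t * x t) (at t within {0..<T})"
    and t: "t \<in> {0..<T}"
  shows "x t = x 0 * exp (integral {0..t} a)"
proof -
  define A where "A s = integral {0..s} a" for s
  have dA: "(A has_real_derivative a s) (at s within {0..<T})" if "s \<in> {0..<T}" for s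
    unfolding A_def[abs_def] by (rule antideriv[OF c that])
  have "((\<lambda>s. x s * exp (- A s)) has_real_derivative 0) (at s within {0..<T})" if s: "s \<in> {0..<T}" for s
  proof -
    show ?thesis
      by (rule DERIV_cong[OF DERIV_mult[OF d[OF s] DERIV_chain2[OF DERIV_exp DERIV_minus[OF dA[OF s]]]]])
        (simp add: algebra_simps)
  qed
  moreover have cvx: "convex {0..<T}" by (rule convex_real_interval(7))
  ultimately obtain C where C: "\<forall>s\<in>{0..<T}. x s * exp (- A s) = C"
    using has_field_derivative_zero_constant[OF cvx] by blast
  have "0 \<in> {0..<T}" using t by auto
  then have "x 0 * exp (- A 0) = C" using C by blast
  then have "x 0 = C" by (simp add: A_def)
  then have "x t * exp (- A t) = x 0" using C t by simp
  then have "x t = x 0 * exp (A t)" by (simp add: exp_minus field_simps)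
  then show ?thesis by (simp add: A_def)
qed

theorem proposition2p3:
  fixes n :: nat and k cb rho0 tB :: real
    and lam0 :: "nat \<Rightarrow> real"
    and lam :: "nat \<Rightarrow> real \<Rightarrow> real" and rho :: "real \<Rightarrow> real"
  assumes "n \<ge> 2" and "k > 0" and "cb > 0" and "rho0 > 0"
    and "\<And>i j. 1 \<le> i \<Longrightarrow> i \<le> j \<Longrightarrow> j \<le> n \<Longrightarrow> lam0 i \<le> lam0 j"
    and "0 < tB"
    and "maximal_solution n k cb rho0 lam0 tB lam rho"
  shows "\<exists>J1 J2. 1 \<le> J1 \<and> J1 \<le> J2 \<and> J2 \<le> n \<and>
           (\<forall>i\<in>{1..J1}. filterlim (lam i) at_bot (at_left tB)) \<and>
           (\<forall>i\<in>{J2<..n}. filterlim (lam i) at_top (at_left tB))"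
proof -
  note ms = assms(7)
  have n2: "2 \<le> n" and k: "0 < k" and cb: "0 < cb" and r0p: "0 < rho0" using assms by auto
  have sol: "is_solution n k cb rho0 lam0 tB lam rho"
    using ms unfolding maximal_solution_def by auto
  have tB: "0 < tB" and r0: "rho 0 = rho0" and l0: "\<And>i. i \<in> {1..n} \<Longrightarrow> lam i 0 = lam0 i"
    using sol unfolding is_solution_def by auto
  define K where "K = k / real n"
  have K0: "0 < K" using k n2 by (simp add: K_def)
  have Dl: "\<And>t i. t \<in> {0..<tB} \<Longrightarrow> i \<in> {1..n} \<Longrightarrow> (lam i has_real_derivative
              (- (lam i t)\<^sup>2 + K * (rho t - cb))) (at t within {0..<tB})"
    and Dr: "\<And>t. t \<in> {0..<tB} \<Longrightarrow> (rho has_real_derivative (- rho t * (\<Sum>i=1..n. lam i t))) (at t within {0..<tB})"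
    using sol unfolding is_solution_def K_def by auto
  have n1: "1 \<in> {1..n}" using n2 by auto
  have cl: "continuous_on {0..<tB} (lam i)" if "i \<in> {1..n}" for i
    by (rule deriv_cont_on[where f'="\<lambda>t. - (lam i t)\<^sup>2 + K * (rho t - cb)", OF Dl[OF _ that]]) auto
  have cr: "continuous_on {0..<tB} rho"
    by (rule deriv_cont_on[where f'="\<lambda>t. - rho t * (\<Sum>i=1..n. lam i t)", OF Dr]) auto
  have cLam: "continuous_on {0..<tB} (\<lambda>t. \<Sum>j=1..n. lam j t)"
    by (intro continuous_on_sum) (auto intro: cl)
  have rpos: "0 < rho t" if t: "t \<in> {0..<tB}" for t
  proof -
    have "rho t = rho 0 * exp (integral {0..t} (\<lambda>s. - (\<Sum>j=1..n. lam j s)))"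
    proof (rule lin_sol[OF _ _ t])
      show "continuous_on {0..<tB} (\<lambda>s. - (\<Sum>j=1..n. lam j s))" using cLam by (rule continuous_on_minus)
      fix s assume s: "s \<in> {0..<tB}"
      show "(rho has_real_derivative - (\<Sum>j=1..n. lam j s) * rho s) (at s within {0..<tB})"
        by (rule DERIV_cong[OF Dr[OF s]]) simp
    qed
    then show ?thesis using r0 r0p by simp
  qed
  have ord: "lam 1 t \<le> lam i t" if t: "t \<in> {0..<tB}" and i: "i \<in> {1..n}" for t i
  proof -
    have "lam i t - lam 1 t = (lam i 0 - lam 1 0) * exp (integral {0..t} (\<lambda>s. - (lam i s + lam 1 s)))"
    proof (rule lin_sol[where x="\<lambda>s. lam i s - lam 1 s", OF _ _ t])
      show "continuous_on {0..<tB} (\<lambda>s. - (lam i s + lam 1 s))" using cl[OF i] cl[OF n1] by (intro continuous_intros)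
      fix s assume s: "s \<in> {0..<tB}"
      show "((\<lambda>s. lam i s - lam 1 s) has_real_derivative - (lam i s + lam 1 s) * (lam i s - lam 1 s)) (at s within {0..<tB})"
        by (rule DERIV_cong[OF DERIV_diff[OF Dl[OF s i] Dl[OF s n1]]]) (simp add: algebra_simps power2_eq_square)
    qed
    moreover have "lam i 0 - lam 1 0 \<ge> 0" using l0[OF i] l0[OF n1] assms(5)[of 1 i] i by auto
    ultimately have "lam i t - lam 1 t \<ge> 0" by simp
    then show ?thesis by simp
  qed
  have Lam_ge: "real n * lam 1 t \<le> (\<Sum>j=1..n. lam j t)" if t: "t \<in> {0..<tB}" for t
  proof -
    have "(\<Sum>j=1..n. lam 1 t) \<le> (\<Sum>j=1..n. lam j t)" using ord[OF t] by (intro sum_mono) auto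
    then show ?thesis by simp
  qed
  have ric: "lam i t \<le> max (lam0 i) (sqrt (K * P))"
    if P: "\<And>s. s \<in> {0..<tB} \<Longrightarrow> rho s \<le> P" and i: "i \<in> {1..n}" and t: "t \<in> {0..<tB}" for P i t
  proof (rule barrier[where a=0 and b=t and f="lam i" and S="{0..<tB}" and f'="\<lambda>s. - (lam i s)\<^sup>2 + K * (rho s - cb)"])
    show "0 \<le> t" using t by simp
    show "{0..t} \<subseteq> {0..<tB}" using t by auto
    show "(lam i has_real_derivative - (lam i x)\<^sup>2 + K * (rho x - cb)) (at x within {0..<tB})"
      if "x \<in> {0..t}" for x using Dl[OF _ i, of x] that t by auto
    show "lam i 0 \<le> max (lam0 i) (sqrt (K * P))" using l0[OF i] by simp
    fix x assume x: "x \<in> {0<..<t}" and gt: "lam i x > max (lam0 i) (sqrt (K * P))"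
    have xI: "x \<in> {0..<tB}" using x t by auto
    have P0: "0 \<le> P" using P[OF xI] rpos[OF xI] by simp
    have sq0: "0 \<le> sqrt (K * P)" using K0 P0 by simp
    have "sqrt (K * P) \<le> lam i x" using gt by simp
    then have "(sqrt (K * P))\<^sup>2 \<le> (lam i x)\<^sup>2" using sq0 by (intro power_mono) auto
    then have "K * P \<le> (lam i x)\<^sup>2" using K0 P0 by simp
    moreover have "K * (rho x - cb) \<le> K * P" using P[OF xI] cb K0 by (intro mult_left_mono) auto
    ultimately show "- (lam i x)\<^sup>2 + K * (rho x - cb) \<le> 0" by linarith
  qed
  have lowcontra: False if hm: "\<And>t. t \<in> {0..<tB} \<Longrightarrow> m \<le> lam 1 t" for m
  proof -
    define c1 where "c1 = real n * \<bar>m\<bar>"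
    have c10: "0 \<le> c1" by (simp add: c1_def)
    define P where "P = rho0 * exp (c1 * tB)"
    have rhoP: "rho t \<le> P" if t: "t \<in> {0..<tB}" for t
    proof -
      define g where "g s = rho s * exp (- c1 * s)" for s
      have dg: "(g has_real_derivative rho s * exp (- c1 * s) * (- (\<Sum>j=1..n. lam j s) - c1)) (at s within {0..<tB})"
        if s: "s \<in> {0..<tB}" for s
      proof -
        have de: "((\<lambda>s. exp (- c1 * s)) has_real_derivative exp (- c1 * s) * (- c1)) (at s within {0..<tB})"
          by (rule DERIV_chain2[OF DERIV_exp]) (auto intro!: derivative_eq_intros)
        show ?thesis unfolding g_def[abs_def]
          by (rule DERIV_cong[OF DERIV_mult[OF Dr[OF s] de]]) (simp add: algebra_simps)
      qed
      have "(\<lambda>s. - g s) 0 \<le> (\<lambda>s. - g s) t"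
      proof (rule mono_deriv[where a=0 and b=t and f="\<lambda>s. - g s" and S="{0..<tB}" and f'="\<lambda>s. - (rho s * exp (- c1 * s) * (- (\<Sum>j=1..n. lam j s) - c1))"])
        show "0 \<le> t" using t by simp
        show "{0..t} \<subseteq> {0..<tB}" using t by auto
        show "((\<lambda>s. - g s) has_real_derivative - (rho x * exp (- c1 * x) * (- (\<Sum>j=1..n. lam j x) - c1))) (at x within {0..<tB})"
          if "x \<in> {0..t}" for x using that t by (intro DERIV_minus dg) auto
        fix x assume x: "x \<in> {0<..<t}"
        have xI: "x \<in> {0..<tB}" using x t by auto
        have "- c1 \<le> real n * m"
        proof -
          have "- \<bar>m\<bar> \<le> m" by simp
          then have "real n * (- \<bar>m\<bar>) \<le> real n * m" by (intro mult_left_mono) auto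
          then show ?thesis by (simp add: c1_def)
        qed
        also have "\<dots> \<le> real n * lam 1 x" using hm[OF xI] by (intro mult_left_mono) auto
        also have "\<dots> \<le> (\<Sum>j=1..n. lam j x)" by (rule Lam_ge[OF xI])
        finally have "- (\<Sum>j=1..n. lam j x) - c1 \<le> 0" by simp
        moreover have "0 < rho x * exp (- c1 * x)" using rpos[OF xI] by simp
        ultimately show "0 \<le> - (rho x * exp (- c1 * x) * (- (\<Sum>j=1..n. lam j x) - c1))"
          by (simp add: mult_nonneg_nonpos)
      qed
      then have "g t \<le> rho0" using r0 by (simp add: g_def)
      then have "rho t \<le> rho0 * exp (c1 * t)" by (simp add: g_def exp_minus field_simps)
      also have "\<dots> \<le> P" unfolding P_def using r0p c10 t by (auto intro!: mult_left_mono mult_left_mono)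
      finally show ?thesis .
    qed
    define B where "B i = max (lam0 i) (sqrt (K * P))" for i
    define R where "R = \<bar>m\<bar> + P + (\<Sum>i=1..n. \<bar>B i\<bar>)"
    have P0: "0 \<le> P" using r0p by (simp add: P_def)
    have sB: "0 \<le> (\<Sum>i=1..n. \<bar>B i\<bar>)" by (simp add: sum_nonneg)
    show False
    proof (rule bounded_contra[OF ms _ k, of R])
      show "1 \<le> n" using n2 by simp
      show "0 \<le> cb" using cb by simp
      fix t assume t: "t \<in> {0..<tB}"
      have "\<bar>rho t\<bar> \<le> R" using abs_of_pos[OF rpos[OF t]] rhoP[OF t] sB abs_ge_zero[of m] unfolding R_def by linarith
      moreover have "\<bar>lam i t\<bar> \<le> R" if i: "i \<in> {1..n}" for i
      proof -
        have lo: "m \<le> lam i t" using hm[OF t] ord[OF t i] by simp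
        have hi: "lam i t \<le> B i" unfolding B_def by (rule ric[OF rhoP i t])
        have "\<bar>B i\<bar> \<le> (\<Sum>i=1..n. \<bar>B i\<bar>)" using i by (intro member_le_sum) auto
        then show ?thesis using lo hi P0 abs_ge_zero[of m] abs_ge_zero[of "B i"] unfolding R_def by linarith
      qed
      ultimately show "\<bar>rho t\<bar> \<le> R \<and> (\<forall>i\<in>{1..n}. \<bar>lam i t\<bar> \<le> R)" by blast
    qed
  qed
  define c where "c = K * cb"
  have c0: "0 \<le> c" using K0 cb by (simp add: c_def)
  define M where "M = (\<lambda>t. integral {0..t} (lam 1))"
  define v where "v = (\<lambda>t. exp (M t))"
  define w where "w = (\<lambda>t. lam 1 t * v t)"
  have dM: "(M has_real_derivative lam 1 t) (at t within {0..<tB})" if t: "t \<in> {0..<tB}" for t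
    unfolding M_def by (rule antideriv[OF cl[OF n1] t])
  have dv: "(v has_real_derivative w t) (at t within {0..<tB})" if t: "t \<in> {0..<tB}" for t
    unfolding v_def
    by (rule DERIV_cong[OF DERIV_chain2[OF DERIV_exp dM[OF t]]]) (simp add: w_def v_def mult.commute)
  have vpos: "0 < v t" for t by (simp add: v_def)
  have v0: "v 0 = 1" by (simp add: v_def M_def)
  have dw: "(w has_real_derivative K * (rho t - cb) * v t) (at t within {0..<tB})" if t: "t \<in> {0..<tB}" for t
    unfolding w_def
    by (rule DERIV_cong[OF DERIV_mult[OF Dl[OF t n1] dv[OF t]]]) (simp add: w_def algebra_simps power2_eq_square)
  have w2: "- c * v t \<le> K * (rho t - cb) * v t" if t: "t \<in> {0..<tB}" for t
  proof -
    have "- c \<le> K * (rho t - cb)" using rpos[OF t] K0 by (simp add: c_def algebra_simps)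
    then show ?thesis using vpos[of t] by (intro mult_right_mono) auto
  qed
  have cv: "continuous_on {0..<tB} v" by (rule deriv_cont_on[OF dv]) auto
  have vlow: False if d0: "0 < \<delta>" and dv0: "\<And>t. t \<in> {0..<tB} \<Longrightarrow> \<delta> \<le> v t" for \<delta>
  proof -
    define g where "g = (\<lambda>s. rho s * v s ^ n)"
    have dg: "(g has_real_derivative rho s * v s ^ n * (real n * lam 1 s - (\<Sum>j=1..n. lam j s))) (at s within {0..<tB})"
      if s: "s \<in> {0..<tB}" for s
    proof -
      have vn: "v s ^ (n - Suc 0) * v s = v s ^ n"
      proof -
        obtain n' where n': "n = Suc n'" using n2 by (cases n) auto
        show ?thesis by (simp add: n' mult.commute)
      qed
      have "(g has_real_derivative (- rho s * (\<Sum>j=1..n. lam j s)) * v s ^ n + (of_nat n * (w s * v s ^ (n - Suc 0))) * rho s)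
          (at s within {0..<tB})"
        unfolding g_def by (rule DERIV_mult[OF Dr[OF s] DERIV_power[OF dv[OF s]]])
      moreover have "(- rho s * (\<Sum>j=1..n. lam j s)) * v s ^ n + (of_nat n * (w s * v s ^ (n - Suc 0))) * rho s
          = rho s * v s ^ n * (real n * lam 1 s - (\<Sum>j=1..n. lam j s))"
      proof -
        have "w s * v s ^ (n - Suc 0) = lam 1 s * (v s ^ (n - Suc 0) * v s)" by (simp add: w_def algebra_simps)
        then have "w s * v s ^ (n - Suc 0) = lam 1 s * v s ^ n" using vn by simp
        then show ?thesis by (simp add: algebra_simps)
      qed
      ultimately show ?thesis by simp
    qed
    define P where "P = rho0 / \<delta> ^ n"
    have rhoP: "rho t \<le> P" if t: "t \<in> {0..<tB}" for t
    proof -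
      have "(\<lambda>s. - g s) 0 \<le> (\<lambda>s. - g s) t"
      proof (rule mono_deriv[where a=0 and b=t and f="\<lambda>s. - g s" and S="{0..<tB}"
            and f'="\<lambda>s. - (rho s * v s ^ n * (real n * lam 1 s - (\<Sum>j=1..n. lam j s)))"])
        show "0 \<le> t" using t by simp
        show "{0..t} \<subseteq> {0..<tB}" using t by auto
        show "((\<lambda>s. - g s) has_real_derivative - (rho x * v x ^ n * (real n * lam 1 x - (\<Sum>j=1..n. lam j x)))) (at x within {0..<tB})"
          if "x \<in> {0..t}" for x using that t by (intro DERIV_minus dg) auto
        fix x assume x: "x \<in> {0<..<t}"
        have xI: "x \<in> {0..<tB}" using x t by auto
        have "0 \<le> rho x * v x ^ n" using rpos[OF xI] vpos[of x] by simp
        moreover have "real n * lam 1 x - (\<Sum>j=1..n. lam j x) \<le> 0" using Lam_ge[OF xI] by simp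
        ultimately show "0 \<le> - (rho x * v x ^ n * (real n * lam 1 x - (\<Sum>j=1..n. lam j x)))"
          by (simp add: mult_nonneg_nonpos)
      qed
      then have "g t \<le> rho0" using r0 v0 by (simp add: g_def)
      then have "rho t * v t ^ n \<le> rho0" by (simp add: g_def)
      moreover have "\<delta> ^ n \<le> v t ^ n" using dv0[OF t] d0 by (intro power_mono) auto
      moreover have "0 < \<delta> ^ n" using d0 by simp
      ultimately have "rho t * \<delta> ^ n \<le> rho0"
        using rpos[OF t] by (meson less_eq_real_def mult_left_mono order_trans)
      then show ?thesis unfolding P_def using d0 by (simp add: field_simps)
    qed
    define B where "B = max (lam0 1) (sqrt (K * P))"
    have muB: "lam 1 t \<le> B" if t: "t \<in> {0..<tB}" for t
      unfolding B_def by (rule ric[OF rhoP n1 t])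
    define V where "V = exp (\<bar>B\<bar> * tB)"
    have vV: "v t \<le> V" if t: "t \<in> {0..<tB}" for t
    proof -
      have "(\<lambda>s. \<bar>B\<bar> * s - M s) 0 \<le> (\<lambda>s. \<bar>B\<bar> * s - M s) t"
      proof (rule mono_deriv[where a=0 and b=t and f="\<lambda>s. \<bar>B\<bar> * s - M s" and S="{0..<tB}"
            and f'="\<lambda>s. \<bar>B\<bar> - lam 1 s"])
        show "0 \<le> t" using t by simp
        show "{0..t} \<subseteq> {0..<tB}" using t by auto
        show "((\<lambda>s. \<bar>B\<bar> * s - M s) has_real_derivative \<bar>B\<bar> - lam 1 x) (at x within {0..<tB})"
          if "x \<in> {0..t}" for x
        proof -
          have xI: "x \<in> {0..<tB}" using that t by auto
          have "((\<lambda>s. \<bar>B\<bar> * s) has_real_derivative \<bar>B\<bar>) (at x within {0..<tB})"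
            by (auto intro!: derivative_eq_intros)
          then show ?thesis by (rule DERIV_diff[OF _ dM[OF xI]])
        qed
        fix x assume x: "x \<in> {0<..<t}"
        have xI: "x \<in> {0..<tB}" using x t by auto
        show "0 \<le> \<bar>B\<bar> - lam 1 x" using muB[OF xI] by simp
      qed
      then have "M t \<le> \<bar>B\<bar> * t" by (simp add: M_def)
      also have "\<dots> \<le> \<bar>B\<bar> * tB" using t by (intro mult_left_mono) auto
      finally show ?thesis by (simp add: v_def V_def)
    qed
    have V0: "0 \<le> V" by (simp add: V_def)
    define C where "C = \<bar>lam0 1\<bar> + c * V * tB"
    have C0: "0 \<le> C" using c0 V0 tB by (simp add: C_def)
    have wC: "- C \<le> w t" if t: "t \<in> {0..<tB}" for t
    proof -
      have "(\<lambda>s. w s + c * V * s) 0 \<le> (\<lambda>s. w s + c * V * s) t"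
      proof (rule mono_deriv[where a=0 and b=t and f="\<lambda>s. w s + c * V * s" and S="{0..<tB}"
            and f'="\<lambda>s. K * (rho s - cb) * v s + c * V"])
        show "0 \<le> t" using t by simp
        show "{0..t} \<subseteq> {0..<tB}" using t by auto
        show "((\<lambda>s. w s + c * V * s) has_real_derivative K * (rho x - cb) * v x + c * V) (at x within {0..<tB})"
          if "x \<in> {0..t}" for x
        proof -
          have xI: "x \<in> {0..<tB}" using that t by auto
          have "((\<lambda>s. c * V * s) has_real_derivative c * V) (at x within {0..<tB})"
            by (auto intro!: derivative_eq_intros)
          then show ?thesis by (rule DERIV_add[OF dw[OF xI]])
        qed
        fix x assume x: "x \<in> {0<..<t}"
        have xI: "x \<in> {0..<tB}" using x t by auto
        have "c * v x \<le> c * V" using vV[OF xI] c0 by (intro mult_left_mono) auto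
        then show "0 \<le> K * (rho x - cb) * v x + c * V" using w2[OF xI] by simp
      qed
      then have "w 0 \<le> w t + c * V * t" by simp
      moreover have "w 0 = lam0 1" using l0[OF n1] v0 by (simp add: w_def)
      moreover have "c * V * t \<le> c * V * tB" using t c0 V0 by (intro mult_left_mono) auto
      ultimately show ?thesis unfolding C_def by linarith
    qed
    have "- C / \<delta> \<le> lam 1 t" if t: "t \<in> {0..<tB}" for t
    proof (cases "0 \<le> lam 1 t")
      case True
      have "- C / \<delta> \<le> 0" using C0 d0 by simp
      then show ?thesis using True by simp
    next
      case False
      have "lam 1 t * v t \<le> lam 1 t * \<delta>" using dv0[OF t] False by (intro mult_left_mono_neg) auto
      then have "- C \<le> lam 1 t * \<delta>" using wC[OF t] by (simp add: w_def)
      then show ?thesis using d0 by (simp add: field_simps)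
    qed
    then show False by (rule lowcontra)
  qed
  have small: "\<exists>t\<in>{t0..<tB}. v t < \<delta>" if t0: "t0 \<in> {0..<tB}" and d0: "0 < \<delta>" for t0 \<delta>
  proof (rule ccontr)
    assume "\<not> ?thesis"
    then have ge: "\<And>t. t \<in> {t0..<tB} \<Longrightarrow> \<delta> \<le> v t" by (meson not_less)
    have "continuous_on {0..t0} v" using cv t0 by (auto intro: continuous_on_subset)
    then obtain x where x: "x \<in> {0..t0}" "\<And>y. y \<in> {0..t0} \<Longrightarrow> v x \<le> v y"
      using continuous_attains_inf[of "{0..t0}" v] t0 by auto
    show False
    proof (rule vlow[of "min \<delta> (v x)"])
      show "0 < min \<delta> (v x)" using d0 vpos[of x] by simp
      fix t assume t: "t \<in> {0..<tB}"
      show "min \<delta> (v x) \<le> v t"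
      proof (cases "t \<le> t0")
        case True then show ?thesis using x(2)[of t] t by auto
      next
        case False then show ?thesis using ge[of t] t by auto
      qed
    qed
  qed
  have key: "lam 1 t < - A"
    if A: "0 < A" and t: "t \<in> {0..<tB}" and tt: "tB - t < min (1 / (4 * A)) (1 / (2 * (c + 1)))" for A t
  proof (rule ccontr)
    assume "\<not> lam 1 t < - A"
    then have muA: "- A \<le> lam 1 t" by simp
    obtain t1 where t1: "t1 \<in> {t..<tB}" "v t1 < v t / 4"
      using small[OF t, of "v t / 4"] vpos[of t] by auto
    have tt1: "t < t1"
    proof (rule ccontr)
      assume "\<not> t < t1"
      then have "t1 = t" using t1 by auto
      then show False using t1 vpos[of t] by simp
    qed
    have t1I: "t1 \<in> {0..<tB}" using t1 t by auto
    have sub1: "{t..t1} \<subseteq> {0..<tB}" using t t1 by auto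
    have inI: "x \<in> {0..<tB}" if "x \<in> {t..t1}" for x using sub1 that by blast
    have "continuous_on {t..t1} v" using cv sub1 by (auto intro: continuous_on_subset)
    then obtain s where s: "s \<in> {t..t1}" and smax: "\<And>y. y \<in> {t..t1} \<Longrightarrow> v y \<le> v s"
      using continuous_attains_sup[of "{t..t1}" v] tt1 by auto
    define m where "m = v s"
    have m0: "0 < m" by (simp add: m_def vpos)
    have mt: "v t \<le> m" using smax[of t] tt1 by (simp add: m_def)
    have st1: "s < t1"
    proof (rule ccontr)
      assume "\<not> s < t1"
      then have "s = t1" using s by auto
      then show False using mt t1(2) vpos[of t] by (simp add: m_def)
    qed
    have sI: "s \<in> {0..<tB}" using s sub1 by auto
    have ws: "- A * m \<le> w s"
    proof (cases "s = t")
      case True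
      have "- A * v t \<le> lam 1 t * v t" using muA vpos[of t] by (intro mult_right_mono) auto
      then show ?thesis using True by (simp add: m_def w_def)
    next
      case False
      then have ts: "t < s" using s by auto
      have "at s within {0..<tB} = at s"
        by (rule at_within_open_subset[of s "{0<..<tB}"]) (use ts t st1 t1 in auto)
      then have "(v has_real_derivative w s) (at s)" using dv[OF sI] by simp
      then have "w s = 0"
      proof (rule DERIV_local_max)
        show "0 < min (s - t) (t1 - s)" using ts st1 by simp
        show "\<forall>y. \<bar>s - y\<bar> < min (s - t) (t1 - s) \<longrightarrow> v y \<le> v s"
        proof (intro allI impI)
          fix y assume y: "\<bar>s - y\<bar> < min (s - t) (t1 - s)"
          have "s - y \<le> \<bar>s - y\<bar>" "y - s \<le> \<bar>s - y\<bar>" by auto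
          then have "y \<in> {t..t1}" using y by auto
          then show "v y \<le> v s" by (rule smax)
        qed
      qed
      then show ?thesis using A m0 by simp
    qed
    have f1: "w s - c * m * (y - s) \<le> w y" if y: "y \<in> {s..t1}" for y
    proof -
      have "(\<lambda>z. w z + c * m * z) s \<le> (\<lambda>z. w z + c * m * z) y"
      proof (rule mono_deriv[where a=s and b=y and f="\<lambda>z. w z + c * m * z" and S="{0..<tB}"
            and f'="\<lambda>z. K * (rho z - cb) * v z + c * m"])
        show "s \<le> y" using y by simp
        show "{s..y} \<subseteq> {0..<tB}" using y s by (auto intro: inI)
        show "((\<lambda>z. w z + c * m * z) has_real_derivative K * (rho x - cb) * v x + c * m) (at x within {0..<tB})"
          if "x \<in> {s..y}" for x
        proof -
          have xI: "x \<in> {0..<tB}" using that y s by (intro inI) auto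
          have "((\<lambda>z. c * m * z) has_real_derivative c * m) (at x within {0..<tB})"
            by (auto intro!: derivative_eq_intros)
          then show ?thesis by (rule DERIV_add[OF dw[OF xI]])
        qed
        fix x assume x: "x \<in> {s<..<y}"
        have xI: "x \<in> {0..<tB}" using x y s by (intro inI) auto
        have "v x \<le> m" using smax[of x] x y s by (auto simp: m_def)
        then have "c * v x \<le> c * m" using c0 by (intro mult_left_mono) auto
        then show "0 \<le> K * (rho x - cb) * v x + c * m" using w2[OF xI] by simp
      qed
      then show ?thesis by (simp add: algebra_simps)
    qed
    define \<sigma> where "\<sigma> = t1 - s"
    have f2: "m + w s * \<sigma> - c * m * \<sigma>\<^sup>2 / 2 \<le> v t1"
    proof -
      have "(\<lambda>z. v z - w s * z + c * m * (z - s)\<^sup>2 / 2) s \<le> (\<lambda>z. v z - w s * z + c * m * (z - s)\<^sup>2 / 2) t1"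
      proof (rule mono_deriv[where a=s and b=t1 and f="\<lambda>z. v z - w s * z + c * m * (z - s)\<^sup>2 / 2" and S="{0..<tB}"
            and f'="\<lambda>z. w z - w s + c * m * (z - s)"])
        show "s \<le> t1" using st1 by simp
        show "{s..t1} \<subseteq> {0..<tB}" using s by (auto intro: inI)
        show "((\<lambda>z. v z - w s * z + c * m * (z - s)\<^sup>2 / 2) has_real_derivative w x - w s + c * m * (x - s))
            (at x within {0..<tB})" if "x \<in> {s..t1}" for x
        proof -
          have xI: "x \<in> {0..<tB}" using that s by (intro inI) auto
          have "((\<lambda>z. - w s * z + c * m * (z - s)\<^sup>2 / 2) has_real_derivative - w s + c * m * (x - s))
              (at x within {0..<tB})"
            by (auto intro!: derivative_eq_intros simp: field_simps)
          from DERIV_add[OF dv[OF xI] this] show ?thesis by (simp add: algebra_simps)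
        qed
        fix x assume x: "x \<in> {s<..<t1}"
        show "0 \<le> w x - w s + c * m * (x - s)" using f1[of x] x by simp
      qed
      then have "v s - w s * s \<le> v t1 - w s * t1 + c * m * (t1 - s)\<^sup>2 / 2" by simp
      then show ?thesis by (simp add: m_def \<sigma>_def algebra_simps)
    qed
    have sig0: "0 \<le> \<sigma>" using st1 by (simp add: \<sigma>_def)
    have sigt: "\<sigma> < min (1 / (4 * A)) (1 / (2 * (c + 1)))" using tt s t1 by (auto simp: \<sigma>_def)
    have e1: "A * \<sigma> \<le> 1/4"
    proof -
      have "\<sigma> \<le> 1 / (4 * A)" using sigt by simp
      then have "A * \<sigma> \<le> A * (1 / (4 * A))" using A by (intro mult_left_mono) auto
      then show ?thesis using A by simp
    qed
    have e2: "c * \<sigma>\<^sup>2 / 2 \<le> 1/4"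
    proof -
      have s2: "\<sigma> \<le> 1 / (2 * (c + 1))" using sigt by simp
      also have "\<dots> \<le> 1" using c0 by (simp add: field_simps)
      finally have s1: "\<sigma> \<le> 1" .
      have "\<sigma>\<^sup>2 \<le> \<sigma>" using s1 sig0 by (simp add: power2_eq_square mult_left_le)
      then have "c * \<sigma>\<^sup>2 \<le> c * \<sigma>" using c0 by (intro mult_left_mono) auto
      also have "\<dots> \<le> c * (1 / (2 * (c + 1)))" using s2 c0 by (intro mult_left_mono) auto
      also have "\<dots> \<le> 1/2" using c0 by (simp add: field_simps)
      finally show ?thesis by simp
    qed
    have "m * (1/2) \<le> m * (1 - A * \<sigma> - c * \<sigma>\<^sup>2 / 2)" using e1 e2 m0 by (intro mult_left_mono) auto
    also have "\<dots> = m - A * m * \<sigma> - c * m * \<sigma>\<^sup>2 / 2" by (simp add: algebra_simps)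
    also have "\<dots> \<le> m + w s * \<sigma> - c * m * \<sigma>\<^sup>2 / 2"
    proof -
      have "- A * m * \<sigma> \<le> w s * \<sigma>" using ws sig0 by (intro mult_right_mono) auto
      then show ?thesis by simp
    qed
    also have "\<dots> \<le> v t1" by (rule f2)
    finally have "m / 2 \<le> v t1" by simp
    then show False using mt t1(2) vpos[of t] by simp
  qed
  have lim: "filterlim (lam 1) at_bot (at_left tB)"
    unfolding filterlim_at_bot
  proof
    fix Z :: real
    define A where "A = \<bar>Z\<bar> + 1"
    have A0: "0 < A" by (simp add: A_def)
    define \<tau> where "\<tau> = min (1 / (4 * A)) (1 / (2 * (c + 1)))"
    have tau0: "0 < \<tau>" using A0 c0 by (simp add: \<tau>_def)
    define b where "b = max 0 (tB - \<tau>)"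
    have b: "b < tB" using tB tau0 by (simp add: b_def)
    have "eventually (\<lambda>x. x \<in> {b<..<tB}) (at_left tB)" by (rule eventually_at_left_real[OF b])
    then show "eventually (\<lambda>x. lam 1 x \<le> Z) (at_left tB)"
    proof (rule eventually_mono)
      fix x assume x: "x \<in> {b<..<tB}"
      then have xI: "x \<in> {0..<tB}" by (auto simp: b_def)
      have "tB - x < \<tau>" using x by (auto simp: b_def)
      then have "lam 1 x < - A" using key[OF A0 xI] by (simp add: \<tau>_def)
      then show "lam 1 x \<le> Z" by (simp add: A_def)
    qed
  qed
  show ?thesis
  proof (intro exI conjI)
    show "1 \<le> (1::nat)" by simp
    show "1 \<le> n" using n2 by simp
    show "n \<le> n" by simp
    show "\<forall>i\<in>{1..1}. filterlim (lam i) at_bot (at_left tB)" using lim by simp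
    show "\<forall>i\<in>{n<..n}. filterlim (lam i) at_top (at_left tB)" by simp
  qed
qed

end
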